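(* Let $\Phi(\lambda)=\int_0^\infty (1-e^{-s\lambda})\,\Pi(ds)$ be a Bernstein function, let $H=\{H_t\}_{t\ge0}$ be a subordinator with $H_0=0$ and $\mathbf{E}[e^{-\lambda H_t}]=e^{-t\Phi(\lambda)}$ for $\lambda>0$, $t>0$, and let $L_t:=\inf\{s>0: H_s>t\}$, $t>0$, with $L_0=0$, be its inverse. Let $\theta>0$ be fixed. Then for every $x\ge 0$ and every $\lambda>0$, $$\int_0^\infty e^{-\lambda t}\,\mathbf{E}_0\!\left[\frac{1-e^{-\theta(L_t-x)}}{\theta}\,\mathbf{1}_{(L_t\ge x)}\right]dt=\frac{1}{\lambda}\,\frac{1}{\theta+\Phi(\lambda)}\,e^{-x\Phi(\lambda)}$$ and $$\int_0^\infty e^{-\lambda t}\,\mathbf{E}_0\!\left[e^{-\theta(L_t-x)}\,\mathbf{1}_{(L_t\ge x)}\right]dt=\frac{\Phi(\lambda)}{\lambda}\,\frac{1}{\theta+\Phi(\lambda)}\,e^{-x\Phi(\lambda)}.$$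
   Context: $\Pi$ is the Lévy measure of the subordinator $H$ (a measure on $(0,\infty)$ with $\int_0^\infty \min(1,s)\,\Pi(ds)<\infty$); the paper works throughout with $\Pi((0,\infty))=\infty$ (so $H$ has strictly increasing paths and $L$ has continuous non-decreasing paths), and assumes $L_t$ and $H_t$ admit densities. $\mathbf{E}_0$ denotes expectation for the processes started at $0$. The relation $\mathbf{P}_0(L_t<s)=\mathbf{P}_0(H_s>t)$ holds. *)

theory Defs
  imports "HOL-Probability.Probability"
begin

text \<open>Levy measure of a (driftless) subordinator: a measure on the reals
  concentrated on (0,\<infinity>) with finite integral of min(1,s).  The paper
  additionally works with infinite total mass.\<close>
definition levy_measure :: "real measure \<Rightarrow> bool" where
  "levy_measure Pm \<longleftrightarrow> sets Pm = sets borel \<and> emeasure Pm {..0} = 0 \<and>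
     (\<integral>\<^sup>+ s. ennreal (min 1 s) \<partial>Pm) < \<infinity>"

definition bernstein :: "real measure \<Rightarrow> real \<Rightarrow> real" where
  "bernstein Pm lam = (\<integral> s. (1 - exp (- s * lam)) \<partial>Pm)"

definition subordinator :: "'a measure \<Rightarrow> (real \<Rightarrow> 'a \<Rightarrow> real) \<Rightarrow> bool" where
  "subordinator M H \<longleftrightarrow> prob_space M \<and>
     (\<forall>t. H t \<in> borel_measurable M) \<and>
     (\<forall>\<omega>\<in>space M. H 0 \<omega> = 0 \<and> mono_on {0..} (\<lambda>t. H t \<omega>) \<and>
        (\<forall>t\<ge>0. continuous (at_right t) (\<lambda>s. H s \<omega>))) \<and>
     (\<forall>s t. 0 \<le> s \<longrightarrow> 0 \<le> t \<longrightarrow>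
        distr M borel (\<lambda>\<omega>. H (s + t) \<omega> - H s \<omega>) = distr M borel (H t)) \<and>
     (\<forall>(tt :: nat \<Rightarrow> real) n. 0 \<le> tt 0 \<and> (\<forall>i<n. tt i \<le> tt (Suc i)) \<longrightarrow>
        prob_space.indep_vars M (\<lambda>_. borel) (\<lambda>i \<omega>. H (tt (Suc i)) \<omega> - H (tt i) \<omega>) {..<n})"

definition inverse_sub :: "(real \<Rightarrow> 'a \<Rightarrow> real) \<Rightarrow> real \<Rightarrow> 'a \<Rightarrow> real" where
  "inverse_sub H t \<omega> = (if t = 0 then 0 else Inf {s. s > 0 \<and> H s \<omega> > t})"

end

theory Submission
  imports Defs
begin


lemma exp_tail_ge:
  fixes c a :: real assumes c: "c > 0"
  shows "(\<integral>\<^sup>+t. ennreal (exp (- c * t)) * indicator {a..} t \<partial>lborel) = ennreal (exp (- c * a) / c)"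
proof -
  have "(\<integral>\<^sup>+t. ennreal (exp (- c * t)) * indicator {a..} t \<partial>lborel) = ennreal (0 - (- exp (- c * a) / c))"
  proof (rule nn_integral_FTC_atLeast)
    show "(\<lambda>t. exp (- c * t)) \<in> borel_measurable borel" by measurable
    show "((\<lambda>t. - exp (- c * t) / c) has_real_derivative exp (- c * t)) (at t)" for t
      using c by (auto intro!: derivative_eq_intros)
    show "((\<lambda>t. - exp (- c * t) / c) \<longlongrightarrow> 0) at_top"
      using c by real_asymp
  qed auto
  then show ?thesis by simp
qed

lemma exp_tail_gt:
  fixes c a :: real assumes c: "c > 0"
  shows "(\<integral>\<^sup>+t. ennreal (exp (- c * t)) * indicator {a<..} t \<partial>lborel) = ennreal (exp (- c * a) / c)"
proof -
  have "(\<integral>\<^sup>+t. ennreal (exp (- c * t)) * indicator {a<..} t \<partial>lborel) = (\<integral>\<^sup>+t. ennreal (exp (- c * t)) * indicator {a..} t \<partial>lborel)"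
    by (rule nn_integral_cong_AE) (use AE_lborel_singleton[of a] in \<open>auto elim!: eventually_mono split: split_indicator\<close>)
  then show ?thesis using exp_tail_ge[OF c] by simp
qed

lemma g_repr:
  fixes \<theta> x y :: real assumes th: "\<theta> > 0"
  shows "ennreal ((1 - exp (- \<theta> * (y - x))) / \<theta> * indicator {x..} y) =
    (\<integral>\<^sup>+s. ennreal (exp (- \<theta> * (s - x))) * indicator {x..} s * indicator {s<..} y \<partial>lborel)"
proof (cases "x \<le> y")
  case False
  have "(\<integral>\<^sup>+s. ennreal (exp (- \<theta> * (s - x))) * indicator {x..} s * indicator {s<..} y \<partial>lborel) = (\<integral>\<^sup>+(s::real). 0 \<partial>lborel)"
    by (rule nn_integral_cong) (use False in \<open>auto split: split_indicator\<close>)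
  then show ?thesis using False by simp
next
  case True
  have hb: "has_bochner_integral lborel (\<lambda>s. exp (- \<theta> * (s - x)) * indicator {x .. y} s)
      ((- exp (- \<theta> * (y - x)) / \<theta>) - (- exp (- \<theta> * (x - x)) / \<theta>))"
    by (rule has_bochner_integral_FTC_Icc_real[OF True])
      (use th in \<open>auto intro!: derivative_eq_intros continuous_intros\<close>)
  have "(\<integral>\<^sup>+s. ennreal (exp (- \<theta> * (s - x))) * indicator {x..} s * indicator {s<..} y \<partial>lborel)
      = (\<integral>\<^sup>+s. ennreal (exp (- \<theta> * (s - x)) * indicator {x .. y} s) \<partial>lborel)"
    by (rule nn_integral_cong_AE) (use AE_lborel_singleton[of y] in \<open>auto elim!: eventually_mono split: split_indicator\<close>)
  also have "\<dots> = ennreal ((- exp (- \<theta> * (y - x)) / \<theta>) - (- exp (- \<theta> * (x - x)) / \<theta>))"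
    using hb by (subst nn_integral_eq_integral) (auto simp: has_bochner_integral_iff)
  finally show ?thesis using True th by (simp add: field_simps)
qed



context
  fixes M :: "'a measure" and H :: "real \<Rightarrow> 'a \<Rightarrow> real"
  assumes sub: "subordinator M H"
begin

lemma PS: "prob_space M" using sub unfolding subordinator_def by auto
lemma Hm: "H s \<in> borel_measurable M" using sub unfolding subordinator_def by auto
lemma H0: "\<omega> \<in> space M \<Longrightarrow> H 0 \<omega> = 0" using sub unfolding subordinator_def by auto
lemma Hmono: "\<omega> \<in> space M \<Longrightarrow> 0 \<le> r \<Longrightarrow> r \<le> s \<Longrightarrow> H r \<omega> \<le> H s \<omega>"
  using sub unfolding subordinator_def mono_on_def by auto
lemma Hrc: "\<omega> \<in> space M \<Longrightarrow> 0 \<le> s \<Longrightarrow> continuous (at_right s) (\<lambda>r. H r \<omega>)"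
  using sub unfolding subordinator_def by auto
lemma Hnn: "\<omega> \<in> space M \<Longrightarrow> 0 \<le> s \<Longrightarrow> 0 \<le> H s \<omega>"
  using Hmono[of \<omega> 0 s] H0 by auto

lemma L_less_iff:
  assumes w: "\<omega> \<in> space M" and t: "t \<noteq> 0"
  shows "inverse_sub H t \<omega> < a \<longleftrightarrow>
    (\<exists>q::rat. 0 < real_of_rat q \<and> real_of_rat q < a \<and> t < H (real_of_rat q) \<omega>) \<or>
    ((\<forall>n::nat. H (real n + 1) \<omega> \<le> t) \<and> Inf ({}::real set) < a)"
proof -
  define S where "S = {s. s > 0 \<and> H s \<omega> > t}"
  have L: "inverse_sub H t \<omega> = Inf S" using t by (simp add: inverse_sub_def S_def)
  show ?thesis
  proof (cases "S = {}")
    case True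
    have "\<forall>n::nat. H (real n + 1) \<omega> \<le> t"
    proof
      fix n :: nat show "H (real n + 1) \<omega> \<le> t" using True unfolding S_def
        by (metis (mono_tags, lifting) empty_Collect_eq linorder_not_le of_nat_0_le_iff add_nonneg_pos zero_less_one)
    qed
    moreover have "\<not> (\<exists>q::rat. 0 < real_of_rat q \<and> real_of_rat q < a \<and> t < H (real_of_rat q) \<omega>)"
      using True unfolding S_def by auto
    ultimately show ?thesis by (simp only: L True) blast
  next
    case False
    then obtain r where r: "r \<in> S" by auto
    obtain n :: nat where n: "r \<le> real n + 1" 
      by (metis add.commute add_increasing2 le_add_same_cancel2 linear of_nat_0_le_iff real_arch_simple zero_le_one)
    have "H r \<omega> \<le> H (real n + 1) \<omega>" using r n by (intro Hmono[OF w]) (auto simp: S_def)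
    then have nall: "\<not> (\<forall>n::nat. H (real n + 1) \<omega> \<le> t)" using r unfolding S_def by (metis (mono_tags, lifting) mem_Collect_eq order_less_le_trans linorder_not_le)
    have bdd: "bdd_below S" unfolding S_def by (auto intro: bdd_belowI[of _ 0])
    have "Inf S < a \<longleftrightarrow> (\<exists>s\<in>S. s < a)" using cInf_less_iff[OF False bdd] by simp
    also have "\<dots> \<longleftrightarrow> (\<exists>q::rat. 0 < real_of_rat q \<and> real_of_rat q < a \<and> t < H (real_of_rat q) \<omega>)"
    proof
      assume "\<exists>s\<in>S. s < a"
      then obtain s where s: "s \<in> S" "s < a" by auto
      obtain q where q: "q \<in> \<rat>" "s < q" "q < a" using Rats_dense_in_real[OF s(2)] by auto
      then obtain q' where q': "q = real_of_rat q'" by (auto elim: Rats_cases)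
      have "H s \<omega> \<le> H q \<omega>" using s q by (intro Hmono[OF w]) (auto simp: S_def)
      then show "\<exists>q::rat. 0 < real_of_rat q \<and> real_of_rat q < a \<and> t < H (real_of_rat q) \<omega>"
      proof (intro exI[of _ q'] conjI)
        show "0 < real_of_rat q'" using s q q' unfolding S_def by (metis mem_Collect_eq order_less_trans)
        show "real_of_rat q' < a" using q q' by simp
        show "t < H (real_of_rat q') \<omega>" using s q q' \<open>H s \<omega> \<le> H q \<omega>\<close> by (simp add: S_def)
      qed
    next
      assume "\<exists>q::rat. 0 < real_of_rat q \<and> real_of_rat q < a \<and> t < H (real_of_rat q) \<omega>"
      then obtain q :: rat where "0 < real_of_rat q" "real_of_rat q < a" "t < H (real_of_rat q) \<omega>" by blast
      then show "\<exists>s\<in>S. s < a" unfolding S_def by blast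
    qed
    finally show ?thesis using nall by (simp only: L) blast
  qed
qed

lemma L_meas: "(\<lambda>(t, \<omega>). inverse_sub H t \<omega>) \<in> borel_measurable (lborel \<Otimes>\<^sub>M M)"
proof (subst borel_measurable_iff_less, intro allI)
  fix a :: real
  note [measurable] = Hm
  let ?P = "\<lambda>(t, \<omega>). (t = 0 \<and> 0 < a) \<or> (t \<noteq> 0 \<and> ((\<exists>q::rat. 0 < real_of_rat q \<and> real_of_rat q < a \<and> t < H (real_of_rat q) \<omega>) \<or>
    ((\<forall>n::nat. H (real n + 1) \<omega> \<le> t) \<and> Inf ({}::real set) < a)))"
  have "{w \<in> space (lborel \<Otimes>\<^sub>M M). (case w of (t, \<omega>) \<Rightarrow> inverse_sub H t \<omega>) < a} = {w \<in> space (lborel \<Otimes>\<^sub>M M). ?P w}"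
  proof -
    have "(inverse_sub H t \<omega> < a) = ?P (t, \<omega>)" if "\<omega> \<in> space M" for t \<omega>
    proof (cases "t = 0")
      case True then show ?thesis by (simp add: inverse_sub_def)
    next
      case False then show ?thesis using L_less_iff[OF that False, of a] by simp
    qed
    then show ?thesis by (auto simp: space_pair_measure)
  qed
  also have "\<dots> \<in> sets (lborel \<Otimes>\<^sub>M M)" by measurable
  finally show "{w \<in> space (lborel \<Otimes>\<^sub>M M). (case w of (t, \<omega>) \<Rightarrow> inverse_sub H t \<omega>) < a} \<in> sets (lborel \<Otimes>\<^sub>M M)" .
qed

end


lemma bernstein_pos:
  assumes levy: "levy_measure Pm" and inf: "emeasure Pm {0<..} = \<infinity>" and lam: "lam > 0"
  shows "bernstein Pm lam > 0"
proof -
  have sets: "sets Pm = sets borel" using levy by (simp add: levy_measure_def)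
  have fin: "(\<integral>\<^sup>+ s. ennreal (min 1 s) \<partial>Pm) < \<infinity>" using levy by (simp add: levy_measure_def)
  have null: "{..0::real} \<in> null_sets Pm" using levy sets by (auto simp: levy_measure_def null_sets_def)
  have AEpos: "AE s in Pm. s > 0"
    by (rule AE_I'[OF null]) auto
  have meas: "(\<lambda>s. 1 - exp (- s * lam)) \<in> borel_measurable Pm"
    using sets by (simp add: measurable_cong_sets[OF sets refl])
  have bound: "norm (1 - exp (- s * lam)) \<le> max 1 lam * min 1 s" if "s > 0" for s
  proof -
    have e1: "1 - exp (- s * lam) \<ge> 0" using that lam by simp
    have e2: "1 - exp (- s * lam) \<le> s * lam" using exp_ge_add_one_self[of "- s * lam"] by simp
    have e3: "1 - exp (- s * lam) \<le> 1" by simp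
    show ?thesis
    proof (cases "s \<le> 1")
      case True
      then have "s * lam \<le> max 1 lam * min 1 s" using that lam by (simp add: mult.commute mult_right_mono)
      then show ?thesis using e1 e2 by simp
    next
      case False
      have "1 - exp (- s * lam) \<le> max 1 lam" using e3 by (meson max.cobounded1 order_trans)
      then show ?thesis using e1 False by simp
    qed
  qed
  have "(\<integral>\<^sup>+ s. ennreal (norm (1 - exp (- s * lam))) \<partial>Pm) \<le> (\<integral>\<^sup>+ s. ennreal (max 1 lam) * ennreal (min 1 s) \<partial>Pm)"
    using AEpos bound by (intro nn_integral_mono_AE) (auto elim!: eventually_mono simp: ennreal_mult[symmetric] intro!: ennreal_leI)
  also have "\<dots> = ennreal (max 1 lam) * (\<integral>\<^sup>+ s. ennreal (min 1 s) \<partial>Pm)"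
    using sets by (intro nn_integral_cmult) (simp add: measurable_cong_sets[OF sets refl])
  also have "\<dots> < \<infinity>" using fin by (simp add: ennreal_mult_less_top)
  finally have int: "integrable Pm (\<lambda>s. 1 - exp (- s * lam))"
    by (intro integrableI_bounded meas)
  have nn: "AE s in Pm. 0 \<le> 1 - exp (- s * lam)"
    using AEpos lam by (auto elim!: eventually_mono)
  have ge: "bernstein Pm lam \<ge> 0" unfolding bernstein_def using nn by (rule integral_nonneg_AE)
  have "bernstein Pm lam \<noteq> 0"
  proof
    assume "bernstein Pm lam = 0"
    then have "AE s in Pm. 1 - exp (- s * lam) = 0"
      using integral_nonneg_eq_0_iff_AE[OF int nn] by (simp add: bernstein_def)
    then have "AE s in Pm. s \<notin> {0<..}"
      using AEpos lam by (auto elim!: eventually_mono)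
    then have "emeasure Pm {0<..} = 0"
      using sets sets_eq_imp_space_eq[OF sets] by (subst AE_iff_measurable[symmetric, where N="{0<..}"]) auto
    then show False using inf by simp
  qed
  then show ?thesis using ge by simp
qed



context
  fixes M :: "'a measure" and H :: "real \<Rightarrow> 'a \<Rightarrow> real" and Pm :: "real measure"
  assumes sub: "subordinator M H"
    and levy: "levy_measure Pm"
    and infinite_mass: "emeasure Pm {0<..} = \<infinity>"
    and laplace: "\<And>lam t. lam > 0 \<Longrightarrow> t > 0 \<Longrightarrow>
        prob_space.expectation M (\<lambda>\<omega>. exp (- lam * H t \<omega>)) = exp (- t * bernstein Pm lam)"
    and dens_H: "\<And>t. t > 0 \<Longrightarrow> absolutely_continuous lborel (distr M lborel (H t))"
begin

interpretation prob_space M by (rule PS[OF sub])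

context notes [measurable] = L_meas[OF sub] Hm[OF sub]
begin

lemma Lt_meas: "(\<lambda>\<omega>. inverse_sub H t \<omega>) \<in> borel_measurable M"
proof -
  have "(\<lambda>\<omega>. (\<lambda>(t, \<omega>). inverse_sub H t \<omega>) (t, \<omega>)) \<in> borel_measurable M" by measurable
  then show ?thesis by simp
qed

lemma P_meas:
  "(\<lambda>(t, s). \<integral>\<^sup>+\<omega>. indicator {s<..} (inverse_sub H t \<omega>) \<partial>M) \<in> borel_measurable (lborel \<Otimes>\<^sub>M lborel)"
proof -
  have "(\<lambda>ts. \<integral>\<^sup>+\<omega>. (\<lambda>ts \<omega>. indicator {snd ts<..} (inverse_sub H (fst ts) \<omega>)) ts \<omega> \<partial>M) \<in> borel_measurable (lborel \<Otimes>\<^sub>M lborel)"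
    by (rule borel_measurable_nn_integral) (unfold indicator_def greaterThan_iff, measurable)
  then show ?thesis by (simp add: case_prod_beta')
qed

context notes [measurable] = Lt_meas P_meas
begin

lemma AE_ne: fixes s t :: real assumes "s > 0" shows "AE \<omega> in M. H s \<omega> \<noteq> t"
proof -
  have "AE y in distr M lborel (H s). y \<noteq> t"
    by (rule absolutely_continuous_AE[OF _ dens_H[OF assms] AE_lborel_singleton]) simp
  then show ?thesis by (subst (asm) AE_distr_iff) auto
qed

lemma AE_nonempty: fixes lam :: real assumes lam: "lam > 0" shows "AE \<omega> in M. \<exists>r>0. t < H r \<omega>"
proof -
  define \<Phi> where "\<Phi> = bernstein Pm lam"
  have \<Phi>: "\<Phi> > 0" unfolding \<Phi>_def by (rule bernstein_pos[OF levy infinite_mass lam])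
  define N where "N = {\<omega>\<in>space M. \<forall>n::nat. H (real n + 1) \<omega> \<le> t}"
  have Nm: "N \<in> sets M" unfolding N_def by measurable
  have bnd: "measure M N \<le> exp (lam * t) * exp (- (real n + 1) * \<Phi>)" for n :: nat
  proof -
    define r where "r = real n + 1"
    have r: "r > 0" by (simp add: r_def)
    have A: "{\<omega>\<in>space M. H r \<omega> \<le> t} \<in> sets M" by measurable
    have "measure M N \<le> measure M {\<omega>\<in>space M. H r \<omega> \<le> t}"
      using A by (intro finite_measure_mono) (auto simp: N_def r_def)
    also have "\<dots> = (\<integral>\<omega>. indicator {\<omega>\<in>space M. H r \<omega> \<le> t} \<omega> \<partial>M)"
      using A by simp
    also have "\<dots> \<le> (\<integral>\<omega>. exp (lam * t) * exp (- lam * H r \<omega>) \<partial>M)"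
    proof (rule integral_mono)
      show "integrable M (\<lambda>\<omega>. exp (lam * t) * exp (- lam * H r \<omega>))"
      proof (intro integrable_mult_right integrable_const_bound[where B=1])
        show "AE \<omega> in M. norm (exp (- lam * H r \<omega>)) \<le> 1"
          using Hnn[OF sub _ less_imp_le[OF r]] lam by (auto intro!: AE_I2 simp: mult_nonneg_nonneg)
      qed measurable
      show "integrable M (indicator {\<omega>\<in>space M. H r \<omega> \<le> t} :: _ \<Rightarrow> real)"
        using A by (simp add: integrable_indicator_iff Int_absorb2 sets.sets_into_space less_top[symmetric])
      fix \<omega> assume "\<omega> \<in> space M"
      show "indicator {\<omega>\<in>space M. H r \<omega> \<le> t} \<omega> \<le> exp (lam * t) * exp (- lam * H r \<omega>)"
      proof (cases "H r \<omega> \<le> t")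
        case True
        then have "0 \<le> lam * t + - lam * H r \<omega>" using lam by (simp add: algebra_simps mult_left_mono)
        then have "1 \<le> exp (lam * t + - lam * H r \<omega>)" by simp
        then have "1 \<le> exp (lam * t) * exp (- lam * H r \<omega>)" by (simp add: exp_add[symmetric])
        then show ?thesis by (simp split: split_indicator)
      qed (simp split: split_indicator)
    qed
    also have "\<dots> = exp (lam * t) * exp (- r * \<Phi>)"
      using laplace[OF lam r] by (simp add: \<Phi>_def)
    finally show ?thesis by (simp add: r_def)
  qed
  have lim: "(\<lambda>n::nat. exp (lam * t) * exp (- (real n + 1) * \<Phi>)) \<longlonglongrightarrow> 0"
    using \<Phi> by real_asymp
  have "measure M N \<le> 0"
    by (rule LIMSEQ_le_const[OF lim]) (use bnd in auto)
  then have "N \<in> null_sets M" using Nm by (simp add: measure_le_0_iff null_sets_def emeasure_eq_measure)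
  then have "AE \<omega> in M. \<omega> \<notin> N" by (rule AE_not_in)
  then show ?thesis
  proof (rule AE_mp[OF _ AE_I2, rule_format])
    fix \<omega> assume "\<omega> \<in> space M" "\<omega> \<notin> N"
    then obtain n :: nat where "\<not> H (real n + 1) \<omega> \<le> t" by (auto simp: N_def)
    then show "\<exists>r>0. t < H r \<omega>" by (intro exI[of _ "real n + 1"]) auto
  qed
qed

lemma rel:
  assumes w: "\<omega> \<in> space M" and t: "t > 0" and s: "s \<ge> 0"
    and ne: "\<exists>r>0. t < H r \<omega>" and neq: "H s \<omega> \<noteq> t"
  shows "s < inverse_sub H t \<omega> \<longleftrightarrow> H s \<omega> < t"
proof -
  define S where "S = {r. r > 0 \<and> H r \<omega> > t}"
  have L: "inverse_sub H t \<omega> = Inf S" using t by (simp add: inverse_sub_def S_def)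
  have Sne: "S \<noteq> {}" using ne by (auto simp: S_def)
  have bdd: "bdd_below S" unfolding S_def by (auto intro: bdd_belowI[of _ 0])
  show ?thesis
  proof
    assume less: "s < inverse_sub H t \<omega>"
    show "H s \<omega> < t"
    proof (rule ccontr)
      assume "\<not> H s \<omega> < t"
      then have gt: "H s \<omega> > t" using neq by simp
      then have "s \<noteq> 0" using H0[OF sub w] t by auto
      then have "s \<in> S" using s gt by (auto simp: S_def)
      then have "Inf S \<le> s" by (rule cInf_lower[OF _ bdd])
      then show False using less L by simp
    qed
  next
    assume Hs: "H s \<omega> < t"
    have "((\<lambda>r. H r \<omega>) \<longlongrightarrow> H s \<omega>) (at_right s)"
      using Hrc[OF sub w s] by (simp add: continuous_within)
    then have "eventually (\<lambda>r. H r \<omega> < t) (at_right s)"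
      using Hs by (rule order_tendstoD)
    then obtain b where b: "b > s" "\<And>y. s < y \<Longrightarrow> y < b \<Longrightarrow> H y \<omega> < t"
      by (auto simp: eventually_at_right_field)
    define r0 where "r0 = (s + b) / 2"
    have r0: "s < r0" "r0 < b" using b by (auto simp: r0_def)
    have Hr0: "H r0 \<omega> < t" using b r0 by auto
    have "r0 \<le> Inf S"
    proof (rule cInf_greatest[OF Sne])
      fix r assume "r \<in> S"
      then have r: "r > 0" "H r \<omega> > t" by (auto simp: S_def)
      show "r0 \<le> r"
      proof (rule ccontr)
        assume "\<not> r0 \<le> r"
        then have "H r \<omega> \<le> H r0 \<omega>" using r by (intro Hmono[OF sub w]) auto
        then show False using r Hr0 by simp
      qed
    qed
    then show "s < inverse_sub H t \<omega>" using L r0 by simp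
  qed
qed

lemma prob_rel:
  fixes lam :: real
  assumes lam: "lam > 0" and t: "t > 0" and s: "s \<ge> 0"
  shows "(\<integral>\<^sup>+\<omega>. indicator {s<..} (inverse_sub H t \<omega>) \<partial>M) = (\<integral>\<^sup>+\<omega>. indicator {..<t} (H s \<omega>) \<partial>M)"
proof (rule nn_integral_cong_AE)
  have ne: "AE \<omega> in M. H s \<omega> \<noteq> t"
  proof (cases "s = 0")
    case True then show ?thesis using H0[OF sub] t by (auto intro!: AE_I2)
  next
    case False then show ?thesis using s by (intro AE_ne) auto
  qed
  show "AE \<omega> in M. indicator {s<..} (inverse_sub H t \<omega>) = (indicator {..<t} (H s \<omega>) :: ennreal)"
    using ne AE_nonempty[OF lam, of t] AE_space
  proof eventually_elim
    case (elim \<omega>)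
    then show ?case using rel[of \<omega> t s] t s by (simp split: split_indicator)
  qed
qed


lemma pair_sf: "pair_sigma_finite M lborel"
  by (intro pair_sigma_finite.intro prob_space_imp_sigma_finite[OF PS[OF sub]]) unfold_locales

lemma laplace0:
  fixes lam s :: real
  assumes lam: "lam > 0" and s: "s \<ge> 0"
  shows "expectation (\<lambda>\<omega>. exp (- lam * H s \<omega>)) = exp (- s * bernstein Pm lam)"
proof (cases "s = 0")
  case True
  have "expectation (\<lambda>\<omega>. exp (- lam * H s \<omega>)) = expectation (\<lambda>\<omega>. 1)"
    using True H0[OF sub] by (intro Bochner_Integration.integral_cong) auto
  then show ?thesis using True prob_space by simp
next
  case False then show ?thesis using laplace[OF lam] s by simp
qed

lemma K:
  fixes lam s :: real
  assumes lam: "lam > 0" and s: "s \<ge> 0"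
  shows "(\<integral>\<^sup>+t. ennreal (indicator {0<..} t * exp (- lam * t)) * (\<integral>\<^sup>+\<omega>. indicator {s<..} (inverse_sub H t \<omega>) \<partial>M) \<partial>lborel)
    = ennreal (exp (- s * bernstein Pm lam) / lam)"
proof -
  interpret pm: pair_sigma_finite M lborel by (rule pair_sf)
  have "(\<integral>\<^sup>+t. ennreal (indicator {0<..} t * exp (- lam * t)) * (\<integral>\<^sup>+\<omega>. indicator {s<..} (inverse_sub H t \<omega>) \<partial>M) \<partial>lborel)
     = (\<integral>\<^sup>+t. ennreal (indicator {0<..} t * exp (- lam * t)) * (\<integral>\<^sup>+\<omega>. indicator {..<t} (H s \<omega>) \<partial>M) \<partial>lborel)"
  proof (rule nn_integral_cong)
    fix t :: real
    show "ennreal (indicator {0<..} t * exp (- lam * t)) * (\<integral>\<^sup>+\<omega>. indicator {s<..} (inverse_sub H t \<omega>) \<partial>M) =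
          ennreal (indicator {0<..} t * exp (- lam * t)) * (\<integral>\<^sup>+\<omega>. indicator {..<t} (H s \<omega>) \<partial>M)"
    proof (cases "t > 0")
      case True then show ?thesis using prob_rel[OF lam True s] by simp
    qed simp
  qed
  also have "\<dots> = (\<integral>\<^sup>+t. (\<integral>\<^sup>+\<omega>. ennreal (indicator {0<..} t * exp (- lam * t)) * indicator {..<t} (H s \<omega>) \<partial>M) \<partial>lborel)"
    by (intro nn_integral_cong nn_integral_cmult[symmetric]) measurable
  also have "\<dots> = (\<integral>\<^sup>+\<omega>. (\<integral>\<^sup>+t. ennreal (indicator {0<..} t * exp (- lam * t)) * indicator {..<t} (H s \<omega>) \<partial>lborel) \<partial>M)"
    by (rule pm.Fubini') (unfold indicator_def lessThan_iff greaterThan_iff, measurable)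
  also have "\<dots> = (\<integral>\<^sup>+\<omega>. ennreal (exp (- lam * H s \<omega>) / lam) \<partial>M)"
  proof (rule nn_integral_cong)
    fix \<omega> assume w: "\<omega> \<in> space M"
    have h: "0 \<le> H s \<omega>" by (rule Hnn[OF sub w s])
    have "(\<integral>\<^sup>+t. ennreal (indicator {0<..} t * exp (- lam * t)) * indicator {..<t} (H s \<omega>) \<partial>lborel)
        = (\<integral>\<^sup>+t. ennreal (exp (- lam * t)) * indicator {H s \<omega><..} t \<partial>lborel)"
      using h by (intro nn_integral_cong) (auto split: split_indicator)
    also have "\<dots> = ennreal (exp (- lam * H s \<omega>) / lam)" by (rule exp_tail_gt[OF lam])
    finally show "(\<integral>\<^sup>+t. ennreal (indicator {0<..} t * exp (- lam * t)) * indicator {..<t} (H s \<omega>) \<partial>lborel)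
        = ennreal (exp (- lam * H s \<omega>) / lam)" .
  qed
  also have "\<dots> = ennreal (\<integral>\<omega>. exp (- lam * H s \<omega>) / lam \<partial>M)"
  proof (rule nn_integral_eq_integral)
    show "integrable M (\<lambda>\<omega>. exp (- lam * H s \<omega>) / lam)"
    proof (intro integrable_divide integrable_const_bound[where B=1])
      show "AE \<omega> in M. norm (exp (- lam * H s \<omega>)) \<le> 1"
        using Hnn[OF sub _ s] lam by (auto intro!: AE_I2 simp: mult_nonneg_nonneg)
    qed measurable
  qed (use lam in auto)
  also have "\<dots> = ennreal (exp (- s * bernstein Pm lam) / lam)"
    using laplace0[OF lam s] by simp
  finally show ?thesis .
qed

lemma A_repr:
  fixes \<theta> x t :: real
  assumes th: "\<theta> > 0"
  shows "ennreal (expectation (\<lambda>\<omega>. (1 - exp (- \<theta> * (inverse_sub H t \<omega> - x))) / \<theta> * indicator {x..} (inverse_sub H t \<omega>)))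
    = (\<integral>\<^sup>+s. ennreal (exp (- \<theta> * (s - x))) * indicator {x..} s * (\<integral>\<^sup>+\<omega>. indicator {s<..} (inverse_sub H t \<omega>) \<partial>M) \<partial>lborel)"
proof -
  interpret pm: pair_sigma_finite M lborel by (rule pair_sf)
  have "ennreal (expectation (\<lambda>\<omega>. (1 - exp (- \<theta> * (inverse_sub H t \<omega> - x))) / \<theta> * indicator {x..} (inverse_sub H t \<omega>)))
      = (\<integral>\<^sup>+\<omega>. ennreal ((1 - exp (- \<theta> * (inverse_sub H t \<omega> - x))) / \<theta> * indicator {x..} (inverse_sub H t \<omega>)) \<partial>M)"
  proof (rule nn_integral_eq_integral[symmetric])
    show "integrable M (\<lambda>\<omega>. (1 - exp (- \<theta> * (inverse_sub H t \<omega> - x))) / \<theta> * indicator {x..} (inverse_sub H t \<omega>))"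
    proof (rule integrable_const_bound[where B="1/\<theta>"])
      show "AE \<omega> in M. norm ((1 - exp (- \<theta> * (inverse_sub H t \<omega> - x))) / \<theta> * indicator {x..} (inverse_sub H t \<omega>)) \<le> 1 / \<theta>"
        using th by (intro AE_I2) (auto split: split_indicator simp: divide_right_mono mult_nonneg_nonneg)
    qed measurable
    show "AE \<omega> in M. 0 \<le> (1 - exp (- \<theta> * (inverse_sub H t \<omega> - x))) / \<theta> * indicator {x..} (inverse_sub H t \<omega>)"
      using th by (intro AE_I2) (auto split: split_indicator simp: mult_nonneg_nonneg)
  qed
  also have "\<dots> = (\<integral>\<^sup>+\<omega>. (\<integral>\<^sup>+s. ennreal (exp (- \<theta> * (s - x))) * indicator {x..} s * indicator {s<..} (inverse_sub H t \<omega>) \<partial>lborel) \<partial>M)"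
    using g_repr[OF th] by simp
  also have "\<dots> = (\<integral>\<^sup>+s. (\<integral>\<^sup>+\<omega>. ennreal (exp (- \<theta> * (s - x))) * indicator {x..} s * indicator {s<..} (inverse_sub H t \<omega>) \<partial>M) \<partial>lborel)"
    by (rule pm.Fubini'[symmetric]) (unfold indicator_def atLeast_iff greaterThan_iff, measurable)
  also have "\<dots> = (\<integral>\<^sup>+s. ennreal (exp (- \<theta> * (s - x))) * indicator {x..} s * (\<integral>\<^sup>+\<omega>. indicator {s<..} (inverse_sub H t \<omega>) \<partial>M) \<partial>lborel)"
    by (intro nn_integral_cong nn_integral_cmult) (unfold indicator_def greaterThan_iff, measurable)
  finally show ?thesis .
qed

lemma first_nn:
  fixes \<theta> x lam :: real
  assumes th: "\<theta> > 0" and x: "x \<ge> 0" and lam: "lam > 0"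
  shows "(\<integral>\<^sup>+t. ennreal (indicator {0<..} t * (exp (- lam * t) * expectation
          (\<lambda>\<omega>. (1 - exp (- \<theta> * (inverse_sub H t \<omega> - x))) / \<theta> * indicator {x..} (inverse_sub H t \<omega>)))) \<partial>lborel)
     = ennreal (1 / lam * (1 / (\<theta> + bernstein Pm lam)) * exp (- x * bernstein Pm lam))"
proof -
  define \<Phi> where "\<Phi> = bernstein Pm lam"
  have \<Phi>: "\<Phi> > 0" unfolding \<Phi>_def by (rule bernstein_pos[OF levy infinite_mass lam])
  define A where "A t = expectation (\<lambda>\<omega>. (1 - exp (- \<theta> * (inverse_sub H t \<omega> - x))) / \<theta> * indicator {x..} (inverse_sub H t \<omega>))" for t
  define P where "P t s = (\<integral>\<^sup>+\<omega>. indicator {s<..} (inverse_sub H t \<omega>) \<partial>M)" for t s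
  define c where "c s = ennreal (exp (- \<theta> * (s - x))) * indicator {x..} s" for s :: real
  have Pm2[measurable]: "(\<lambda>(t, s). P t s) \<in> borel_measurable (lborel \<Otimes>\<^sub>M lborel)"
    unfolding P_def by (rule P_meas)
  have Pm1[measurable]: "(\<lambda>s. P t s) \<in> borel_measurable lborel" for t
    using measurable_Pair2[OF Pm2] by simp
  have Pm0[measurable]: "(\<lambda>t. P t s) \<in> borel_measurable lborel" for s
    using measurable_Pair1[OF Pm2] by simp
  have cm[measurable]: "c \<in> borel_measurable lborel"
  proof -
    have "(\<lambda>s. ennreal (exp (- \<theta> * (s - x))) * (if x \<le> s then 1 else 0)) \<in> borel_measurable lborel" by measurable
    then show ?thesis by (simp add: c_def[abs_def] indicator_def)
  qed
  have Anonneg: "A t \<ge> 0" for t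
    unfolding A_def using th by (intro integral_nonneg_AE AE_I2) (auto split: split_indicator simp: mult_nonneg_nonneg)
  have "(\<integral>\<^sup>+t. ennreal (indicator {0<..} t * (exp (- lam * t) * A t)) \<partial>lborel)
      = (\<integral>\<^sup>+t. ennreal (indicator {0<..} t * exp (- lam * t)) * (\<integral>\<^sup>+s. c s * P t s \<partial>lborel) \<partial>lborel)"
  proof (rule nn_integral_cong)
    fix t :: real
    have "ennreal (indicator {0<..} t * (exp (- lam * t) * A t)) = ennreal (indicator {0<..} t * exp (- lam * t)) * ennreal (A t)"
      using Anonneg by (simp add: ennreal_mult[symmetric] mult.assoc)
    also have "ennreal (A t) = (\<integral>\<^sup>+s. c s * P t s \<partial>lborel)"
      unfolding A_def c_def P_def by (rule A_repr[OF th])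
    finally show "ennreal (indicator {0<..} t * (exp (- lam * t) * A t)) = ennreal (indicator {0<..} t * exp (- lam * t)) * (\<integral>\<^sup>+s. c s * P t s \<partial>lborel)" .
  qed
  also have "\<dots> = (\<integral>\<^sup>+t. (\<integral>\<^sup>+s. ennreal (indicator {0<..} t * exp (- lam * t)) * (c s * P t s) \<partial>lborel) \<partial>lborel)"
    by (intro nn_integral_cong nn_integral_cmult[symmetric]) measurable
  also have "\<dots> = (\<integral>\<^sup>+s. (\<integral>\<^sup>+t. ennreal (indicator {0<..} t * exp (- lam * t)) * (c s * P t s) \<partial>lborel) \<partial>lborel)"
    by (rule lborel_pair.Fubini'[symmetric]) measurable
  also have "\<dots> = (\<integral>\<^sup>+s. c s * (\<integral>\<^sup>+t. ennreal (indicator {0<..} t * exp (- lam * t)) * P t s \<partial>lborel) \<partial>lborel)"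
    by (intro nn_integral_cong) (subst nn_integral_cmult[symmetric], measurable, simp add: ac_simps)
  also have "\<dots> = (\<integral>\<^sup>+s. c s * ennreal (exp (- s * \<Phi>) / lam) \<partial>lborel)"
  proof (rule nn_integral_cong)
    fix s :: real
    show "c s * (\<integral>\<^sup>+t. ennreal (indicator {0<..} t * exp (- lam * t)) * P t s \<partial>lborel) = c s * ennreal (exp (- s * \<Phi>) / lam)"
    proof (cases "x \<le> s")
      case True
      then show ?thesis using K[OF lam, of s] x unfolding P_def \<Phi>_def by simp
    qed (simp add: c_def)
  qed
  also have "\<dots> = (\<integral>\<^sup>+s. ennreal (exp (\<theta> * x) / lam) * (ennreal (exp (- (\<theta> + \<Phi>) * s)) * indicator {x..} s) \<partial>lborel)"
  proof (rule nn_integral_cong)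
    fix s :: real
    have "exp (- \<theta> * (s - x)) * (exp (- s * \<Phi>) / lam) = exp (\<theta> * x) / lam * exp (- (\<theta> + \<Phi>) * s)"
      by (simp add: exp_add[symmetric] algebra_simps)
    then show "c s * ennreal (exp (- s * \<Phi>) / lam) = ennreal (exp (\<theta> * x) / lam) * (ennreal (exp (- (\<theta> + \<Phi>) * s)) * indicator {x..} s)"
      unfolding c_def using lam by (simp add: ennreal_mult'[symmetric] ac_simps)
  qed
  also have "\<dots> = ennreal (exp (\<theta> * x) / lam) * ennreal (exp (- (\<theta> + \<Phi>) * x) / (\<theta> + \<Phi>))"
    using exp_tail_ge[of "\<theta> + \<Phi>" x] th \<Phi> by (subst nn_integral_cmult) auto
  also have "\<dots> = ennreal (1 / lam * (1 / (\<theta> + \<Phi>)) * exp (- x * \<Phi>))"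
  proof -
    have eq: "exp (\<theta> * x) / lam * (exp (- (\<theta> + \<Phi>) * x) / (\<theta> + \<Phi>)) = 1 / lam * (1 / (\<theta> + \<Phi>)) * exp (- x * \<Phi>)"
      by (simp add: exp_add[symmetric] algebra_simps)
    have "ennreal (exp (\<theta> * x) / lam) * ennreal (exp (- (\<theta> + \<Phi>) * x) / (\<theta> + \<Phi>)) = ennreal (exp (\<theta> * x) / lam * (exp (- (\<theta> + \<Phi>) * x) / (\<theta> + \<Phi>)))"
      using lam th \<Phi> by (intro ennreal_mult[symmetric]) auto
    then show ?thesis by (simp only: eq)
  qed
  finally show ?thesis unfolding A_def \<Phi>_def .
qed

lemma second_nn:
  fixes x lam :: real
  assumes x: "x \<ge> 0" and lam: "lam > 0"
    and dens_L: "\<And>t. t > 0 \<Longrightarrow> absolutely_continuous lborel (distr M lborel (inverse_sub H t))"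
  shows "(\<integral>\<^sup>+t. ennreal (indicator {0<..} t * (exp (- lam * t) * expectation (\<lambda>\<omega>. indicator {x..} (inverse_sub H t \<omega>)))) \<partial>lborel)
     = ennreal (exp (- x * bernstein Pm lam) / lam)"
proof -
  have "(\<integral>\<^sup>+t. ennreal (indicator {0<..} t * (exp (- lam * t) * expectation (\<lambda>\<omega>. indicator {x..} (inverse_sub H t \<omega>)))) \<partial>lborel)
    = (\<integral>\<^sup>+t. ennreal (indicator {0<..} t * exp (- lam * t)) * (\<integral>\<^sup>+\<omega>. indicator {x<..} (inverse_sub H t \<omega>) \<partial>M) \<partial>lborel)"
  proof (rule nn_integral_cong)
    fix t :: real
    show "ennreal (indicator {0<..} t * (exp (- lam * t) * expectation (\<lambda>\<omega>. indicator {x..} (inverse_sub H t \<omega>))))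
      = ennreal (indicator {0<..} t * exp (- lam * t)) * (\<integral>\<^sup>+\<omega>. indicator {x<..} (inverse_sub H t \<omega>) \<partial>M)"
    proof (cases "t > 0")
      case t: True
      have im: "(\<lambda>\<omega>. indicator {x..} (inverse_sub H t \<omega>) :: real) \<in> borel_measurable M"
      proof -
        have "(\<lambda>\<omega>. if x \<le> inverse_sub H t \<omega> then 1 else 0 :: real) \<in> borel_measurable M" by measurable
        then show ?thesis by (simp add: indicator_def)
      qed
      have nn: "expectation (\<lambda>\<omega>. indicator {x..} (inverse_sub H t \<omega>)) \<ge> (0::real)"
        by (rule Bochner_Integration.integral_nonneg) auto
      have "ennreal (expectation (\<lambda>\<omega>. indicator {x..} (inverse_sub H t \<omega>) :: real))
          = (\<integral>\<^sup>+\<omega>. ennreal (indicator {x..} (inverse_sub H t \<omega>)) \<partial>M)"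
      proof (rule nn_integral_eq_integral[symmetric])
        show "integrable M (\<lambda>\<omega>. indicator {x..} (inverse_sub H t \<omega>) :: real)"
          by (rule integrable_const_bound[where B=1]) (auto intro!: AE_I2 im split: split_indicator)
      qed (auto intro!: AE_I2)
      also have "\<dots> = (\<integral>\<^sup>+\<omega>. indicator {x<..} (inverse_sub H t \<omega>) \<partial>M)"
      proof (rule nn_integral_cong_AE)
        have "AE y in distr M lborel (inverse_sub H t). y \<noteq> x"
          by (rule absolutely_continuous_AE[OF _ dens_L[OF t] AE_lborel_singleton]) simp
        then have "AE \<omega> in M. inverse_sub H t \<omega> \<noteq> x" by (subst (asm) AE_distr_iff) auto
        then show "AE \<omega> in M. ennreal (indicator {x..} (inverse_sub H t \<omega>)) = indicator {x<..} (inverse_sub H t \<omega>)"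
          by (auto elim!: eventually_mono split: split_indicator)
      qed
      finally have E: "ennreal (expectation (\<lambda>\<omega>. indicator {x..} (inverse_sub H t \<omega>) :: real)) = (\<integral>\<^sup>+\<omega>. indicator {x<..} (inverse_sub H t \<omega>) \<partial>M)" .
      have "ennreal ((indicator {0<..} t * exp (- lam * t)) * expectation (\<lambda>\<omega>. indicator {x..} (inverse_sub H t \<omega>)))
        = ennreal (indicator {0<..} t * exp (- lam * t)) * ennreal (expectation (\<lambda>\<omega>. indicator {x..} (inverse_sub H t \<omega>) :: real))"
        by (rule ennreal_mult) (use nn in auto)
      then show ?thesis by (simp only: E mult.assoc)
    qed simp
  qed
  also have "\<dots> = ennreal (exp (- x * bernstein Pm lam) / lam)" by (rule K[OF lam x])
  finally show ?thesis .
qed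

end
end
end

theorem proposition2p1:
  fixes M :: "'a measure" and H :: "real \<Rightarrow> 'a \<Rightarrow> real" and Pm :: "real measure"
    and \<theta> :: real
  assumes sub: "subordinator M H"
    and levy: "levy_measure Pm"
    and infinite_mass: "emeasure Pm {0<..} = \<infinity>"
    and laplace: "\<And>lam t. lam > 0 \<Longrightarrow> t > 0 \<Longrightarrow>
        prob_space.expectation M (\<lambda>\<omega>. exp (- lam * H t \<omega>)) = exp (- t * bernstein Pm lam)"
    and dens_H: "\<And>t. t > 0 \<Longrightarrow> absolutely_continuous lborel (distr M lborel (H t))"
    and dens_L: "\<And>t. t > 0 \<Longrightarrow> absolutely_continuous lborel (distr M lborel (inverse_sub H t))"
    and theta: "\<theta> > 0"
  shows "\<forall>x \<ge> 0. \<forall>lam > 0.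
      (LBINT t:{0<..}. exp (- lam * t) * prob_space.expectation M
          (\<lambda>\<omega>. (1 - exp (- \<theta> * (inverse_sub H t \<omega> - x))) / \<theta>
                 * indicator {x..} (inverse_sub H t \<omega>)))
        = 1 / lam * (1 / (\<theta> + bernstein Pm lam)) * exp (- x * bernstein Pm lam)
    \<and> (LBINT t:{0<..}. exp (- lam * t) * prob_space.expectation M
          (\<lambda>\<omega>. exp (- \<theta> * (inverse_sub H t \<omega> - x)) * indicator {x..} (inverse_sub H t \<omega>)))
        = bernstein Pm lam / lam * (1 / (\<theta> + bernstein Pm lam)) * exp (- x * bernstein Pm lam)"
proof (intro allI impI)
  fix x lam :: real
  assume x: "x \<ge> 0" and lam: "lam > 0"
  interpret prob_space M by (rule PS[OF sub])
  note [measurable] = L_meas[OF sub] Hm[OF sub]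
  define \<Phi> where "\<Phi> = bernstein Pm lam"
  have \<Phi>: "\<Phi> > 0" unfolding \<Phi>_def by (rule bernstein_pos[OF levy infinite_mass lam])
  define g where "g y = (1 - exp (- \<theta> * (y - x))) / \<theta> * indicator {x..} y" for y :: real
  define A where "A t = expectation (\<lambda>\<omega>. (1 - exp (- \<theta> * (inverse_sub H t \<omega> - x))) / \<theta> * indicator {x..} (inverse_sub H t \<omega>))" for t
  define Pp where "Pp t = expectation (\<lambda>\<omega>. indicator {x..} (inverse_sub H t \<omega>) :: real)" for t
  have gm[measurable]: "g \<in> borel_measurable borel"
  proof -
    have "(\<lambda>y. (1 - exp (- \<theta> * (y - x))) / \<theta> * (if x \<le> y then 1 else 0)) \<in> borel_measurable borel" by measurable
    then show ?thesis by (simp add: g_def[abs_def] indicator_def)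
  qed
  have im[measurable]: "(\<lambda>y. indicator {x..} y :: real) \<in> borel_measurable borel"
  proof -
    have "(\<lambda>y. (if x \<le> y then 1 else 0 :: real)) \<in> borel_measurable borel" by measurable
    then show ?thesis by (simp add: indicator_def)
  qed
  have Am[measurable]: "A \<in> borel_measurable lborel"
  proof -
    have "(\<lambda>t. \<integral>\<omega>. g (inverse_sub H t \<omega>) \<partial>M) \<in> borel_measurable lborel" by measurable
    then show ?thesis by (simp add: A_def[abs_def] g_def)
  qed
  have Ppm[measurable]: "Pp \<in> borel_measurable lborel"
  proof -
    have "(\<lambda>t. \<integral>\<omega>. indicator {x..} (inverse_sub H t \<omega>) \<partial>M :: real) \<in> borel_measurable lborel" by measurable
    then show ?thesis by (simp add: Pp_def[abs_def])
  qed
  have Anonneg: "A t \<ge> 0" for t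
    unfolding A_def using theta by (intro integral_nonneg_AE AE_I2) (auto split: split_indicator simp: mult_nonneg_nonneg)
  have Ppnonneg: "Pp t \<ge> 0" for t
    unfolding Pp_def by (rule Bochner_Integration.integral_nonneg) auto
  define R1 where "R1 = 1 / lam * (1 / (\<theta> + \<Phi>)) * exp (- x * \<Phi>)"
  have hb1: "has_bochner_integral lborel (\<lambda>t. indicator {0<..} t * (exp (- lam * t) * A t)) R1"
  proof (rule has_bochner_integral_nn_integral)
    show "(\<lambda>t. indicator {0<..} t * (exp (- lam * t) * A t)) \<in> borel_measurable lborel" by measurable
    show "AE t in lborel. 0 \<le> indicator {0<..} t * (exp (- lam * t) * A t)"
      using Anonneg by (intro AE_I2) (auto split: split_indicator)
    show "0 \<le> R1" using lam theta \<Phi> by (simp add: R1_def)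
    show "(\<integral>\<^sup>+t. ennreal (indicator {0<..} t * (exp (- lam * t) * A t)) \<partial>lborel) = ennreal R1"
      unfolding A_def R1_def \<Phi>_def
      by (rule first_nn[OF sub levy infinite_mass laplace dens_H theta x lam])
  qed
  define R2 where "R2 = exp (- x * \<Phi>) / lam"
  have hb2: "has_bochner_integral lborel (\<lambda>t. indicator {0<..} t * (exp (- lam * t) * Pp t)) R2"
  proof (rule has_bochner_integral_nn_integral)
    show "(\<lambda>t. indicator {0<..} t * (exp (- lam * t) * Pp t)) \<in> borel_measurable lborel" by measurable
    show "AE t in lborel. 0 \<le> indicator {0<..} t * (exp (- lam * t) * Pp t)"
      using Ppnonneg by (intro AE_I2) (auto split: split_indicator)
    show "0 \<le> R2" using lam by (simp add: R2_def)
    show "(\<integral>\<^sup>+t. ennreal (indicator {0<..} t * (exp (- lam * t) * Pp t)) \<partial>lborel) = ennreal R2"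
      unfolding Pp_def R2_def \<Phi>_def
      by (rule second_nn[OF sub levy infinite_mass laplace dens_H x lam dens_L])
  qed
  have eq2: "expectation (\<lambda>\<omega>. exp (- \<theta> * (inverse_sub H t \<omega> - x)) * indicator {x..} (inverse_sub H t \<omega>))
      = Pp t - \<theta> * A t" for t
  proof -
    have int1: "integrable M (\<lambda>\<omega>. indicator {x..} (inverse_sub H t \<omega>) :: real)"
      by (rule integrable_const_bound[where B=1]) (auto intro!: AE_I2 split: split_indicator)
    have int2: "integrable M (\<lambda>\<omega>. g (inverse_sub H t \<omega>))"
    proof (rule integrable_const_bound[where B="1/\<theta>"])
      show "AE \<omega> in M. norm (g (inverse_sub H t \<omega>)) \<le> 1 / \<theta>"
        using theta by (intro AE_I2) (auto split: split_indicator simp: g_def divide_right_mono mult_nonneg_nonneg)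
    qed measurable
    have "expectation (\<lambda>\<omega>. exp (- \<theta> * (inverse_sub H t \<omega> - x)) * indicator {x..} (inverse_sub H t \<omega>))
        = expectation (\<lambda>\<omega>. indicator {x..} (inverse_sub H t \<omega>) - \<theta> * g (inverse_sub H t \<omega>))"
      using theta by (intro Bochner_Integration.integral_cong) (auto simp: g_def split: split_indicator)
    also have "\<dots> = Pp t - \<theta> * expectation (\<lambda>\<omega>. g (inverse_sub H t \<omega>))"
      using int1 int2 by (simp add: Pp_def)
    finally show ?thesis by (simp add: A_def g_def)
  qed
  have hb3: "has_bochner_integral lborel (\<lambda>t. indicator {0<..} t * (exp (- lam * t) * (Pp t - \<theta> * A t))) (R2 - \<theta> * R1)"
  proof -
    have "has_bochner_integral lborel (\<lambda>t. indicator {0<..} t * (exp (- lam * t) * Pp t) - \<theta> * (indicator {0<..} t * (exp (- lam * t) * A t))) (R2 - \<theta> * R1)"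
      by (intro has_bochner_integral_diff has_bochner_integral_mult_right hb1 hb2)
    then show ?thesis by (simp add: algebra_simps)
  qed
  have R: "R2 - \<theta> * R1 = \<Phi> / lam * (1 / (\<theta> + \<Phi>)) * exp (- x * \<Phi>)"
  proof -
    have ne: "\<theta> + \<Phi> \<noteq> 0" "lam \<noteq> 0" using lam theta \<Phi> by auto
    show ?thesis unfolding R1_def R2_def
      using ne by (simp add: divide_simps) (simp add: algebra_simps)
  qed
  show "(LBINT t:{0<..}. exp (- lam * t) * prob_space.expectation M
          (\<lambda>\<omega>. (1 - exp (- \<theta> * (inverse_sub H t \<omega> - x))) / \<theta>
                 * indicator {x..} (inverse_sub H t \<omega>)))
        = 1 / lam * (1 / (\<theta> + bernstein Pm lam)) * exp (- x * bernstein Pm lam)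
    \<and> (LBINT t:{0<..}. exp (- lam * t) * prob_space.expectation M
          (\<lambda>\<omega>. exp (- \<theta> * (inverse_sub H t \<omega> - x)) * indicator {x..} (inverse_sub H t \<omega>)))
        = bernstein Pm lam / lam * (1 / (\<theta> + bernstein Pm lam)) * exp (- x * bernstein Pm lam)"
  proof
    show "(LBINT t:{0<..}. exp (- lam * t) * prob_space.expectation M
          (\<lambda>\<omega>. (1 - exp (- \<theta> * (inverse_sub H t \<omega> - x))) / \<theta>
                 * indicator {x..} (inverse_sub H t \<omega>)))
        = 1 / lam * (1 / (\<theta> + bernstein Pm lam)) * exp (- x * bernstein Pm lam)"
      using has_bochner_integral_integral_eq[OF hb1]
      by (simp add: set_lebesgue_integral_def A_def R1_def \<Phi>_def)
    have "(LBINT t:{0<..}. exp (- lam * t) * prob_space.expectation M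
          (\<lambda>\<omega>. exp (- \<theta> * (inverse_sub H t \<omega> - x)) * indicator {x..} (inverse_sub H t \<omega>)))
        = R2 - \<theta> * R1"
      unfolding set_lebesgue_integral_def real_scaleR_def eq2
      by (rule has_bochner_integral_integral_eq[OF hb3])
    then show "(LBINT t:{0<..}. exp (- lam * t) * prob_space.expectation M
          (\<lambda>\<omega>. exp (- \<theta> * (inverse_sub H t \<omega> - x)) * indicator {x..} (inverse_sub H t \<omega>)))
        = bernstein Pm lam / lam * (1 / (\<theta> + bernstein Pm lam)) * exp (- x * bernstein Pm lam)"
      using R by (simp add: \<Phi>_def)
  qed
qed

end
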